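(* Let $\Gamma=(V,E)$ be a finite directed graph with $[n]\subseteq V$, let $w:E\to\mathbb{R}$ be edge weights with no directed cycle of negative total weight, and let $S_1\subset\dots\subset S_s$ be subsets of $V$ with $|S_j|=d_j$, $d_1<\dots<d_s$, such that for each $j$ there is some subset of $[n]$ with a linking onto $S_j$. For $I\in\binom{[n]}{d_j}$ let $\mu_j(I)$ be the minimum weight of a linking from $I$ onto $S_j$ ($\infty$ if none exists). Then $(\mu_1,\dots,\mu_s)$ is a valuated flag matroid of rank $(d_1,\dots,d_s)$.
   Context: A linking from $I$ onto $J$ ($|I|=|J|$) is a collection of $|I|$ pairwise vertex-disjoint directed paths (paths of length 0 allowed), each starting at a vertex of $I$ and ending at a vertex of $J$; its weight is the total weight of its edges. A valuated matroid of rank $d$ on $[n]$ is $\mu:\binom{[n]}{d}\to\mathbb{R}\cup\{\infty\}$, not identically $\infty$, such that for all $S\in\binom{[n]}{d-1}$, $T\in\binom{[n]}{d+1}$ the minimum of $\mu(S\cup t)+\mu(T\setminus t)$, $t\in T\setminus S$, is attained at least twice or is $\infty$. A valuated flag matroid of rank $(d_1,\dots,d_s)$ is a tuple of valuated matroids $\mu_j$ of rank $d_j$ such that for all $j<k$, $S\in\binom{[n]}{d_j-1}$, $T\in\binom{[n]}{d_k+1}$, the minimum of $\mu_j(S\cup t)+\mu_k(T\setminus t)$, $t\in T\setminus S$, is attained at least twice or is $\infty$. *)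

theory Defs
  imports "Graph_Theory.Graph_Theory" "HOL-Library.Extended_Real"
begin

text \<open>The ground set is [n] = {1..n}; vertices of the graph have type nat so that
  [n] is literally a subset of the vertex set.\<close>

definition is_linking ::
  "('a, 'b) pre_digraph \<Rightarrow> 'a set \<Rightarrow> 'a set \<Rightarrow> ('a \<Rightarrow> 'b list) \<Rightarrow> ('a \<Rightarrow> 'a) \<Rightarrow> bool" where
  "is_linking G I J P f \<longleftrightarrow>
     card I = card J \<and>
     (\<forall>i\<in>I. pre_digraph.apath G i (P i) (f i) \<and> f i \<in> J) \<and>
     (\<forall>i\<in>I. \<forall>i'\<in>I. i \<noteq> i' \<longrightarrow>
        set (pre_digraph.awalk_verts G i (P i)) \<inter> set (pre_digraph.awalk_verts G i' (P i')) = {})"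

definition linking_weight :: "('b \<Rightarrow> real) \<Rightarrow> 'a set \<Rightarrow> ('a \<Rightarrow> 'b list) \<Rightarrow> real" where
  "linking_weight w I P = (\<Sum>i\<in>I. sum_list (map w (P i)))"

definition has_linking :: "('a, 'b) pre_digraph \<Rightarrow> 'a set \<Rightarrow> 'a set \<Rightarrow> bool" where
  "has_linking G I J \<longleftrightarrow> (\<exists>P f. is_linking G I J P f)"

definition min_linking_weight ::
  "('a, 'b) pre_digraph \<Rightarrow> ('b \<Rightarrow> real) \<Rightarrow> 'a set \<Rightarrow> 'a set \<Rightarrow> ereal" where
  "min_linking_weight G w J I =
     Inf {ereal (linking_weight w I P) | P f. is_linking G I J P f}"

definition min_twice_or_inf :: "('x \<Rightarrow> ereal) \<Rightarrow> 'x set \<Rightarrow> bool" where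
  "min_twice_or_inf g X \<longleftrightarrow>
     (\<forall>t\<in>X. g t = \<infinity>) \<or>
     (\<exists>t1\<in>X. \<exists>t2\<in>X. t1 \<noteq> t2 \<and> g t1 = g t2 \<and> (\<forall>t\<in>X. g t1 \<le> g t))"

definition valuated_matroid :: "nat \<Rightarrow> nat \<Rightarrow> (nat set \<Rightarrow> ereal) \<Rightarrow> bool" where
  "valuated_matroid n d \<mu> \<longleftrightarrow>
     (\<exists>B. B \<subseteq> {1..n} \<and> card B = d \<and> \<mu> B \<noteq> \<infinity>) \<and>
     (\<forall>S T. S \<subseteq> {1..n} \<and> card S + 1 = d \<and> T \<subseteq> {1..n} \<and> card T = d + 1 \<longrightarrow>
        min_twice_or_inf (\<lambda>t. \<mu> (insert t S) + \<mu> (T - {t})) (T - S))"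

text \<open>Flag of s valuated matroids, indexed 0..s-1, with ranks d 0, ..., d (s-1).\<close>
definition valuated_flag_matroid ::
  "nat \<Rightarrow> nat \<Rightarrow> (nat \<Rightarrow> nat) \<Rightarrow> (nat \<Rightarrow> nat set \<Rightarrow> ereal) \<Rightarrow> bool" where
  "valuated_flag_matroid n s d \<mu> \<longleftrightarrow>
     (\<forall>j<s. valuated_matroid n (d j) (\<mu> j)) \<and>
     (\<forall>j k S T. j < k \<and> k < s \<and> S \<subseteq> {1..n} \<and> card S + 1 = d j \<and>
        T \<subseteq> {1..n} \<and> card T = d k + 1 \<longrightarrow>
        min_twice_or_inf (\<lambda>t. \<mu> j (insert t S) + \<mu> k (T - {t})) (T - S))"

end

theory Submission
  imports Defs "HOL-Library.FuncSet"
begin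

lemma bij_upd:
  assumes "bij_betw f X Y" "x \<in> X" "y' \<notin> Y - {f x}"
  shows "bij_betw (f(x := y')) X (insert y' (Y - {f x}))"
  using assms unfolding bij_betw_def inj_on_def by (auto simp: image_iff) 

lemma bij_ins:
  assumes "bij_betw f X Y" "x \<notin> X" "y \<notin> Y"
  shows "bij_betw (f(x := y)) (insert x X) (insert y Y)"
proof -
  have "bij_betw f X Y = bij_betw (f(x := y)) X Y"
    using assms(2) by (intro bij_betw_cong) auto
  then show ?thesis using assms by (metis bij_betw_combine bij_betw_singletonI fun_upd_same insert_is_Un sup_commute disjoint_insert(2) inf_bot_right Un_commute)
qed

lemma bij_rem:
  assumes "bij_betw f X Y" "x \<in> X"
  shows "bij_betw f (X - {x}) (Y - {f x})"
  using assms unfolding bij_betw_def inj_on_def by (auto simp: image_iff) 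

lemma sum_upd:
  assumes "finite X" "x \<in> X"
  shows "(\<Sum>y\<in>X. g y ((f(x:=a)) y) ((h(x:=b)) y)) = g x a b + (\<Sum>y\<in>X-{x}. g y (f y) (h y))"
proof -
  have "(\<Sum>y\<in>X. g y ((f(x:=a)) y) ((h(x:=b)) y)) = g x a b + (\<Sum>y\<in>X-{x}. g y ((f(x:=a)) y) ((h(x:=b)) y))"
    using assms by (simp add: sum.remove)
  also have "(\<Sum>y\<in>X-{x}. g y ((f(x:=a)) y) ((h(x:=b)) y)) = (\<Sum>y\<in>X-{x}. g y (f y) (h y))"
    by (rule sum.cong) auto
  finally show ?thesis .
qed

lemma exch:
  fixes ok :: "'a \<Rightarrow> 'a \<Rightarrow> 'c \<Rightarrow> bool" and \<kappa> :: "'a \<Rightarrow> 'a \<Rightarrow> 'c \<Rightarrow> real"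
  assumes "finite X" "Y \<subseteq> X" "t0 \<in> P" "t0 \<notin> Q"
    "bij_betw s1 X (P - {t0})" "bij_betw s2 Y (insert t0 Q)"
    "\<forall>x\<in>X. ok x (s1 x) (e1 x)" "\<forall>y\<in>Y. ok y (s2 y) (e2 y)"
  shows "\<exists>t1 s1' e1' s2' e2'. t1 \<in> P - Q - {t0} \<and> bij_betw s1' X (P - {t1})
     \<and> bij_betw s2' Y (insert t1 Q) \<and> (\<forall>x\<in>X. ok x (s1' x) (e1' x)) \<and> (\<forall>y\<in>Y. ok y (s2' y) (e2' y))
     \<and> (\<Sum>x\<in>X. \<kappa> x (s1' x) (e1' x)) + (\<Sum>y\<in>Y. \<kappa> y (s2' y) (e2' y))
       = (\<Sum>x\<in>X. \<kappa> x (s1 x) (e1 x)) + (\<Sum>y\<in>Y. \<kappa> y (s2 y) (e2 y))"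
  using assms
proof (induction "card X" arbitrary: X Y P Q t0 s1 s2 e1 e2 rule: less_induct)
  case less
  from less.prems(6,3) obtain y1 where y1: "y1 \<in> Y" "s2 y1 = t0"
    unfolding bij_betw_def by (metis imageE insertI1)
  have y1X: "y1 \<in> X" using y1 less.prems(2) by auto
  define c1 where "c1 = s1 y1"
  have c1P: "c1 \<in> P - {t0}" using less.prems(5) y1X unfolding c1_def bij_betw_def by auto
  have sX: "(\<Sum>x\<in>X. \<kappa> x (s1 x) (e1 x)) = \<kappa> y1 c1 (e1 y1) + (\<Sum>x\<in>X-{y1}. \<kappa> x (s1 x) (e1 x))"
    using y1X less.prems(1) unfolding c1_def by (simp add: sum.remove)
  have sY: "(\<Sum>y\<in>Y. \<kappa> y (s2 y) (e2 y)) = \<kappa> y1 t0 (e2 y1) + (\<Sum>y\<in>Y-{y1}. \<kappa> y (s2 y) (e2 y))"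
    using y1 less.prems(1,2) by (simp add: sum.remove finite_subset)
  show ?case
  proof (cases "c1 \<in> Q")
    case False
    define s1' where "s1' = s1(y1 := t0)"
    define e1' where "e1' = e1(y1 := e2 y1)"
    define s2' where "s2' = s2(y1 := c1)"
    define e2' where "e2' = e2(y1 := e1 y1)"
    have b1: "bij_betw s1' X (P - {c1})"
    proof -
      have "bij_betw s1' X (insert t0 ((P - {t0}) - {c1}))"
        unfolding s1'_def c1_def by (rule bij_upd[OF less.prems(5) y1X]) auto
      moreover have "insert t0 ((P - {t0}) - {c1}) = P - {c1}" using less.prems(3) c1P by auto
      ultimately show ?thesis by simp
    qed
    have b2: "bij_betw s2' Y (insert c1 Q)"
    proof -
      have "bij_betw s2' Y (insert c1 ((insert t0 Q) - {t0}))"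
        unfolding s2'_def using bij_upd[OF less.prems(6) y1(1)] y1(2) False c1P by auto
      moreover have "insert c1 ((insert t0 Q) - {t0}) = insert c1 Q" using less.prems(4) by auto
      ultimately show ?thesis by simp
    qed
    have o1: "\<forall>x\<in>X. ok x (s1' x) (e1' x)" using less.prems(7,8) y1 unfolding s1'_def e1'_def by auto
    have o2: "\<forall>y\<in>Y. ok y (s2' y) (e2' y)" using less.prems(7,8) y1X unfolding s2'_def e2'_def c1_def by auto
    have s1s: "(\<Sum>x\<in>X. \<kappa> x (s1' x) (e1' x)) = \<kappa> y1 t0 (e2 y1) + (\<Sum>x\<in>X-{y1}. \<kappa> x (s1 x) (e1 x))"
      unfolding s1'_def e1'_def by (rule sum_upd) (use y1X less.prems(1) in auto)
    have s2s: "(\<Sum>y\<in>Y. \<kappa> y (s2' y) (e2' y)) = \<kappa> y1 c1 (e1 y1) + (\<Sum>y\<in>Y-{y1}. \<kappa> y (s2 y) (e2 y))"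
      unfolding s2'_def e2'_def by (rule sum_upd) (use y1 less.prems(1,2) in \<open>auto intro: finite_subset\<close>)
    show ?thesis
      apply (rule exI[of _ c1], rule exI[of _ s1'], rule exI[of _ e1'], rule exI[of _ s2'], rule exI[of _ e2'])
      using b1 b2 o1 o2 s1s s2s sX sY c1P False by auto
  next
    case True
    have lt: "card (X - {y1}) < card X" using y1X less.prems(1) by (meson card_Diff1_less)
    have bb1: "bij_betw s1 (X - {y1}) ((P - {t0}) - {c1})"
      using bij_rem[OF less.prems(5) y1X] unfolding c1_def .
    have bb2: "bij_betw s2 (Y - {y1}) (insert c1 (Q - {c1}))"
    proof -
      have "bij_betw s2 (Y - {y1}) (insert t0 Q - {t0})" using bij_rem[OF less.prems(6) y1(1)] y1(2) by simp
      moreover have "insert t0 Q - {t0} = insert c1 (Q - {c1})" using True less.prems(4) by auto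
      ultimately show ?thesis by simp
    qed
    obtain t1 s1'' e1'' s2'' e2'' where IH: "t1 \<in> (P - {t0}) - (Q - {c1}) - {c1}"
      "bij_betw s1'' (X - {y1}) ((P - {t0}) - {t1})"
      "bij_betw s2'' (Y - {y1}) (insert t1 (Q - {c1}))"
      "\<forall>x\<in>X - {y1}. ok x (s1'' x) (e1'' x)" "\<forall>y\<in>Y - {y1}. ok y (s2'' y) (e2'' y)"
      "(\<Sum>x\<in>X - {y1}. \<kappa> x (s1'' x) (e1'' x)) + (\<Sum>y\<in>Y - {y1}. \<kappa> y (s2'' y) (e2'' y))
       = (\<Sum>x\<in>X - {y1}. \<kappa> x (s1 x) (e1 x)) + (\<Sum>y\<in>Y - {y1}. \<kappa> y (s2 y) (e2 y))"
      using less.hyps[OF lt, of "Y - {y1}" c1 "P - {t0}" "Q - {c1}" s1 s2 e1 e2] less.prems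
        bb1 bb2 c1P True by blast
    define s1' where "s1' = s1''(y1 := t0)"
    define e1' where "e1' = e1''(y1 := e2 y1)"
    define s2' where "s2' = s2''(y1 := c1)"
    define e2' where "e2' = e2''(y1 := e1 y1)"
    have b1: "bij_betw s1' X (P - {t1})"
    proof -
      have "bij_betw s1' (insert y1 (X - {y1})) (insert t0 ((P - {t0}) - {t1}))"
        unfolding s1'_def by (rule bij_ins[OF IH(2)]) auto
      moreover have "insert t0 ((P - {t0}) - {t1}) = P - {t1}" using less.prems(3) IH(1) by auto
      moreover have "insert y1 (X - {y1}) = X" using y1X by auto
      ultimately show ?thesis by simp
    qed
    have b2: "bij_betw s2' Y (insert t1 Q)"
    proof -
      have "bij_betw s2' (insert y1 (Y - {y1})) (insert c1 (insert t1 (Q - {c1})))"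
        unfolding s2'_def by (rule bij_ins[OF IH(3)]) (use IH(1) in auto)
      moreover have "insert c1 (insert t1 (Q - {c1})) = insert t1 Q" using True by auto
      moreover have "insert y1 (Y - {y1}) = Y" using y1 by auto
      ultimately show ?thesis by simp
    qed
    have o1: "\<forall>x\<in>X. ok x (s1' x) (e1' x)" using IH(4) less.prems(8) y1 unfolding s1'_def e1'_def by auto
    have o2: "\<forall>y\<in>Y. ok y (s2' y) (e2' y)" using IH(5) less.prems(7) y1X unfolding s2'_def e2'_def c1_def by auto
    have s1s: "(\<Sum>x\<in>X. \<kappa> x (s1' x) (e1' x)) = \<kappa> y1 t0 (e2 y1) + (\<Sum>x\<in>X-{y1}. \<kappa> x (s1'' x) (e1'' x))"
      unfolding s1'_def e1'_def by (rule sum_upd) (use y1X less.prems(1) in auto)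
    have s2s: "(\<Sum>y\<in>Y. \<kappa> y (s2' y) (e2' y)) = \<kappa> y1 c1 (e1 y1) + (\<Sum>y\<in>Y-{y1}. \<kappa> y (s2'' y) (e2'' y))"
      unfolding s2'_def e2'_def by (rule sum_upd) (use y1 less.prems(1,2) in \<open>auto intro: finite_subset\<close>)
    show ?thesis
      apply (rule exI[of _ t1], rule exI[of _ s1'], rule exI[of _ e1'], rule exI[of _ s2'], rule exI[of _ e2'])
      using b1 b2 o1 o2 s1s s2s sX sY IH(1,6) by auto
  qed
qed



lemma sum2:
  assumes "finite M" "x \<in> M" "v \<in> M" "x \<noteq> v" "\<forall>y\<in>M-{x,v}. g y = g' y"
    "g x + g v = g' x + g' v + (c::real)"
  shows "sum g M = sum g' M + c"
proof -
  have "sum g M = g x + g v + sum g (M - {x,v})"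
    using assms by (simp add: sum.remove[of M x] sum.remove[of "M-{x}" v] Diff_insert2[symmetric] insert_commute)
  moreover have "sum g' M = g' x + g' v + sum g' (M - {x,v})"
    using assms by (simp add: sum.remove[of M x] sum.remove[of "M-{x}" v] Diff_insert2[symmetric] insert_commute)
  moreover have "sum g (M - {x,v}) = sum g' (M - {x,v})" by (rule sum.cong) (use assms(5) in auto)
  ultimately show ?thesis using assms(6) by simp
qed

lemma bij_swap2:
  assumes "bij_betw \<sigma> M M" "x \<in> M" "v \<in> M" "\<sigma> x = v"
  shows "bij_betw (\<sigma>(x := \<sigma> v, v := v)) M M"
proof -
  have inj: "inj_on \<sigma> M" and im: "\<sigma> ` M = M" using assms(1) by (auto simp: bij_betw_def)
  have "inj_on (\<sigma>(x := \<sigma> v, v := v)) M"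
  proof (rule inj_onI)
    fix a b assume ab: "a \<in> M" "b \<in> M" "(\<sigma>(x := \<sigma> v, v := v)) a = (\<sigma>(x := \<sigma> v, v := v)) b"
    then show "a = b" using assms inj_on_eq_iff[OF inj] by (auto split: if_splits)
  qed
  moreover have "(\<sigma>(x := \<sigma> v, v := v)) ` M \<subseteq> M" using assms im by auto
  moreover have "M \<subseteq> (\<sigma>(x := \<sigma> v, v := v)) ` M"
  proof
    fix y assume y: "y \<in> M"
    show "y \<in> (\<sigma>(x := \<sigma> v, v := v)) ` M"
    proof (cases "y = v")
      case True then show ?thesis using assms by (auto intro: image_eqI[of _ _ v])
    next
      case yv: False
      show ?thesis
      proof (cases "y = \<sigma> v")
        case True
        then have "x \<noteq> v" using yv assms by auto
        then show ?thesis using True assms by (auto intro: image_eqI[of _ _ x])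
      next
        case False
        obtain z where z: "z \<in> M" "y = \<sigma> z" using y im by blast
        then have "z \<noteq> v" "z \<noteq> x" using False yv assms by auto
        then show ?thesis using z by (auto intro: image_eqI[of _ _ z])
      qed
    qed
  qed
  ultimately show ?thesis unfolding bij_betw_def by blast
qed

context wf_digraph begin

lemma closed_nonneg:
  assumes cyc: "\<And>p. cycle p \<Longrightarrow> sum_list (map w p) \<ge> (0::real)"
  shows "awalk u p u \<Longrightarrow> p \<noteq> [] \<Longrightarrow> 0 \<le> sum_list (map w p)"
proof (induction "length p" arbitrary: u p rule: less_induct)
  case less
  show ?case
  proof (cases "distinct (tl (awalk_verts u p))")
    case True
    then have "cycle p" using less.prems unfolding cycle_def by auto
    then show ?thesis by (rule cyc)
  next
    case False
    then obtain e es where p: "p = e # es" using less.prems by (cases p) auto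
    with False less.prems have **: "awalk (head G e) es u" "\<not>distinct (awalk_verts (head G e) es)"
      and eu: "e \<in> arcs G" "tail G e = u"
      by (auto simp: awalk_Cons_iff)
    obtain q r s x where d: "es = q @ r @ s" "0 < length r" "awalk (head G e) q x" "awalk x r x" "awalk x s u"
      using awalk_not_distinct_decomp[OF **] by blast
    have r: "0 \<le> sum_list (map w r)"
      using less.hyps[of r x] d p by auto
    have "awalk u (e # q @ s) u"
      using d eu awalk_appendI[OF d(3) d(5)] by (auto simp: awalk_Cons_iff)
    then have "0 \<le> sum_list (map w (e # q @ s))"
      using less.hyps[of "e # q @ s" u] d p by auto
    then show ?thesis using r p d by simp
  qed
qed

lemma perm_nonneg:
  assumes cyc: "\<And>p. cycle p \<Longrightarrow> sum_list (map w p) \<ge> (0::real)"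
  shows "finite M \<Longrightarrow> bij_betw \<sigma> M M \<Longrightarrow> \<forall>v\<in>M. \<sigma> v \<noteq> v \<longrightarrow> awalk v (p v) (\<sigma> v)
    \<Longrightarrow> 0 \<le> (\<Sum>v\<in>M. if \<sigma> v = v then 0 else sum_list (map w (p v)))"
proof (induction "card {v\<in>M. \<sigma> v \<noteq> v}" arbitrary: \<sigma> p rule: less_induct)
  case less
  show ?case
  proof (cases "\<exists>v\<in>M. \<sigma> v \<noteq> v")
    case False
    then show ?thesis by simp
  next
    case True
    then obtain v where v: "v \<in> M" "\<sigma> v \<noteq> v" by blast
    obtain x where x: "x \<in> M" "\<sigma> x = v" using less.prems(2) v(1) unfolding bij_betw_def by (metis imageE)
    have xv: "x \<noteq> v" using x v by auto
    define u where "u = \<sigma> v"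
    have uM: "u \<in> M" using less.prems(2) v unfolding u_def bij_betw_def by auto
    define \<sigma>' where "\<sigma>' = \<sigma>(x := u, v := v)"
    have b: "bij_betw \<sigma>' M M" unfolding \<sigma>'_def u_def by (rule bij_swap2) (use less.prems x v in auto)
    have wx: "awalk x (p x) v" and wv: "awalk v (p v) u" using less.prems(3) x v xv unfolding u_def by auto
    have pxne: "p x \<noteq> []" using wx xv by (auto simp: awalk_Nil_iff)
    have fin: "finite {v\<in>M. \<sigma> v \<noteq> v}" using less.prems(1) by simp
    show ?thesis
    proof (cases "u = x")
      case True
      have sub: "{y\<in>M. \<sigma>' y \<noteq> y} = {y\<in>M. \<sigma> y \<noteq> y} - {x, v}"
        unfolding \<sigma>'_def using True by auto
      have lt: "card {y\<in>M. \<sigma>' y \<noteq> y} < card {y\<in>M. \<sigma> y \<noteq> y}"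
        unfolding sub using fin v by (intro psubset_card_mono) auto
      have IH: "0 \<le> (\<Sum>y\<in>M. if \<sigma>' y = y then 0 else sum_list (map w (p y)))"
        by (rule less.hyps[OF lt less.prems(1) b]) (use less.prems(3) True in \<open>auto simp: \<sigma>'_def\<close>)
      have cl: "0 \<le> sum_list (map w (p x @ p v))"
        using closed_nonneg[OF cyc, of x "p x @ p v"] awalk_appendI[OF wx wv] True pxne by auto
      have "(\<Sum>y\<in>M. if \<sigma> y = y then 0 else sum_list (map w (p y)))
          = (\<Sum>y\<in>M. if \<sigma>' y = y then 0 else sum_list (map w (p y))) + sum_list (map w (p x @ p v))"
        by (rule sum2[OF less.prems(1) x(1) v(1) xv]) (use True xv v x in \<open>auto simp: \<sigma>'_def u_def\<close>)
      then show ?thesis using IH cl by simp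
    next
      case False
      define p' where "p' = p(x := p x @ p v)"
      have sub: "{y\<in>M. \<sigma>' y \<noteq> y} = {y\<in>M. \<sigma> y \<noteq> y} - {v}"
        unfolding \<sigma>'_def using False xv v x by auto
      have lt: "card {y\<in>M. \<sigma>' y \<noteq> y} < card {y\<in>M. \<sigma> y \<noteq> y}"
        unfolding sub using fin v by (intro psubset_card_mono) auto
      have IH: "0 \<le> (\<Sum>y\<in>M. if \<sigma>' y = y then 0 else sum_list (map w (p' y)))"
      proof (rule less.hyps[OF lt less.prems(1) b], intro ballI impI)
        fix y assume y: "y \<in> M" "\<sigma>' y \<noteq> y"
        show "awalk y (p' y) (\<sigma>' y)"
        proof (cases "y = x")
          case True then show ?thesis using awalk_appendI[OF wx wv] xv by (simp add: \<sigma>'_def p'_def)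
        next
          case False then show ?thesis using y less.prems(3) by (auto simp: \<sigma>'_def p'_def split: if_splits)
        qed
      qed
      have "(\<Sum>y\<in>M. if \<sigma> y = y then 0 else sum_list (map w (p y)))
          = (\<Sum>y\<in>M. if \<sigma>' y = y then 0 else sum_list (map w (p' y))) + 0"
        by (rule sum2[OF less.prems(1) x(1) v(1) xv]) (use False xv v x in \<open>auto simp: \<sigma>'_def u_def p'_def\<close>)
      then show ?thesis using IH by simp
    qed
  qed
qed

end


definition mok :: "('a,'b) pre_digraph \<Rightarrow> 'a \<Rightarrow> 'a \<Rightarrow> 'b \<Rightarrow> bool" where
  "mok G v c a \<longleftrightarrow> (c \<noteq> v \<longrightarrow> a \<in> arcs G \<and> tail G a = v \<and> head G a = c)"

definition mcost :: "('b \<Rightarrow> real) \<Rightarrow> 'a \<Rightarrow> 'a \<Rightarrow> 'b \<Rightarrow> real" where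
  "mcost w v c a = (if c = v then 0 else w a)"

context fin_digraph begin

lemma linking_facts:
  assumes "is_linking G A J P f"
  shows "\<And>a. a \<in> A \<Longrightarrow> apath a (P a) (f a)" "\<And>a. a \<in> A \<Longrightarrow> f a \<in> J"
    "\<And>a a'. a \<in> A \<Longrightarrow> a' \<in> A \<Longrightarrow> a \<noteq> a' \<Longrightarrow> set (awalk_verts a (P a)) \<inter> set (awalk_verts a' (P a')) = {}"
    "\<And>a. a \<in> A \<Longrightarrow> a \<in> set (awalk_verts a (P a))"
    "\<And>a. a \<in> A \<Longrightarrow> f a \<in> set (awalk_verts a (P a))"
    "card A = card J"
proof -
  show ap: "\<And>a. a \<in> A \<Longrightarrow> apath a (P a) (f a)" "\<And>a. a \<in> A \<Longrightarrow> f a \<in> J"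
    "\<And>a a'. a \<in> A \<Longrightarrow> a' \<in> A \<Longrightarrow> a \<noteq> a' \<Longrightarrow> set (awalk_verts a (P a)) \<inter> set (awalk_verts a' (P a')) = {}"
    "card A = card J"
    using assms unfolding is_linking_def by auto
  show "\<And>a. a \<in> A \<Longrightarrow> a \<in> set (awalk_verts a (P a))" using ap(1) by (rule hd_in_awalk_verts(2))
  fix a assume "a \<in> A"
  then have "awalk a (P a) (f a)" using ap(1) by (auto simp: apath_def)
  then have "awlast a (P a) = f a" by blast
  then show "f a \<in> set (awalk_verts a (P a))" by (metis last_in_set awalk_verts_non_Nil)
qed

lemma linking_image:
  assumes "is_linking G A J P f" "finite A" "J \<subseteq> verts G"
  shows "f ` A = J"
proof -
  have inj: "inj_on f A"
  proof (rule inj_onI)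
    fix a a' assume "a \<in> A" "a' \<in> A" "f a = f a'"
    then show "a = a'" using linking_facts[OF assms(1)] by (metis disjoint_iff)
  qed
  have "f ` A \<subseteq> J" using linking_facts(2)[OF assms(1)] by auto
  moreover have "card (f ` A) = card J" using card_image[OF inj] linking_facts(6)[OF assms(1)] by simp
  moreover have "finite J" by (rule finite_subset[OF assms(3) finite_verts])
  ultimately show ?thesis by (metis card_subset_eq)
qed

lemma link_to_match:
  assumes JV: "J \<subseteq> verts G"
  shows "is_linking G A J P f \<Longrightarrow> finite A \<Longrightarrow> \<exists>\<sigma> e. bij_betw \<sigma> (verts G - J) (verts G - A)
    \<and> (\<forall>v\<in>verts G - J. mok G v (\<sigma> v) (e v))
    \<and> (\<Sum>v\<in>verts G - J. mcost w v (\<sigma> v) (e v)) = linking_weight w A P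
    \<and> (\<forall>v. (\<forall>a\<in>A. v \<notin> set (awalk_verts a (P a))) \<longrightarrow> \<sigma> v = v)"
proof (induction "\<Sum>a\<in>A. length (P a)" arbitrary: A P f rule: less_induct)
  case less
  note L = linking_facts[OF less.prems(1)]
  show ?case
  proof (cases "\<forall>a\<in>A. P a = []")
    case True
    then have "\<forall>a\<in>A. f a = a" using L(1) by (auto simp: apath_Nil_iff)
    then have "J = A" using linking_image[OF less.prems(1,2) JV] by auto
    then show ?thesis
      apply (intro exI[of _ id] exI[of _ undefined])
      using True by (auto simp: mok_def mcost_def linking_weight_def)
  next
    case False
    then obtain a e p where a: "a \<in> A" "P a = e # p" by (metis neq_Nil_conv)
    define u where "u = head G e"
    have ap: "e \<in> arcs G" "tail G e = a" "apath u p (f a)" "a \<notin> set (awalk_verts u p)"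
      using L(1)[OF a(1)] a(2) unfolding u_def by (auto simp: apath_Cons_iff)
    have va: "set (awalk_verts a (P a)) = insert a (set (awalk_verts u p))"
      using a(2) ap(2) u_def by simp
    have uin: "u \<in> set (awalk_verts u p)" using ap(3) by (rule hd_in_awalk_verts(2))
    have ua: "u \<noteq> a" using uin ap(4) by auto
    have uA: "u \<notin> A"
    proof
      assume "u \<in> A"
      then have "set (awalk_verts a (P a)) \<inter> set (awalk_verts u (P u)) = {}" using L(3) a(1) ua by auto
      then show False using L(4)[OF \<open>u \<in> A\<close>] va uin by auto
    qed
    have uV: "u \<in> verts G" using ap(1) u_def by simp
    define A' where "A' = insert u (A - {a})"
    define P' where "P' = P(u := p)"
    define f' where "f' = f(u := f a)"
    have lin': "is_linking G A' J P' f'"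
      unfolding is_linking_def
    proof (intro conjI ballI impI)
      have "card A > 0" using a(1) less.prems(2) card_gt_0_iff by blast
      then show "card A' = card J" unfolding A'_def using uA a(1) less.prems(2) L(6)
        by (simp add: card.insert_remove)
    next
      fix i assume "i \<in> A'"
      then show "apath i (P' i) (f' i)" "f' i \<in> J"
        unfolding A'_def P'_def f'_def using ap(3) L(1,2) a(1) uA by auto
    next
      fix i i' assume ii: "i \<in> A'" "i' \<in> A'" "i \<noteq> i'"
      have sub: "set (awalk_verts u (P' u)) \<subseteq> set (awalk_verts a (P a))" using va P'_def by auto
      show "set (awalk_verts i (P' i)) \<inter> set (awalk_verts i' (P' i')) = {}"
      proof (cases "i = u")
        case True
        then have "i' \<in> A - {a}" "i' \<noteq> u" using ii A'_def by auto
        then show ?thesis using True sub L(3)[OF a(1), of i'] P'_def by auto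
      next
        case iu: False
        then have i: "i \<in> A - {a}" using ii A'_def by auto
        show ?thesis
        proof (cases "i' = u")
          case True
          then show ?thesis using i iu sub L(3)[OF a(1), of i] P'_def by auto
        next
          case False
          then show ?thesis using i iu ii L(3) P'_def A'_def by auto
        qed
      qed
    qed
    have finA: "finite (A - {a})" using less.prems(2) by simp
    have s1: "(\<Sum>i\<in>A'. length (P' i)) = length p + (\<Sum>i\<in>A - {a}. length (P i))"
      unfolding A'_def P'_def using uA finA by (simp, intro sum.cong) auto
    have s2: "(\<Sum>i\<in>A. length (P i)) = length (P a) + (\<Sum>i\<in>A - {a}. length (P i))"
      using a(1) less.prems(2) by (simp add: sum.remove)
    have lt: "(\<Sum>i\<in>A'. length (P' i)) < (\<Sum>i\<in>A. length (P i))" using s1 s2 a(2) by simp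
    obtain \<sigma>' e' where IH: "bij_betw \<sigma>' (verts G - J) (verts G - A')"
      "\<forall>v\<in>verts G - J. mok G v (\<sigma>' v) (e' v)"
      "(\<Sum>v\<in>verts G - J. mcost w v (\<sigma>' v) (e' v)) = linking_weight w A' P'"
      "\<forall>v. (\<forall>i\<in>A'. v \<notin> set (awalk_verts i (P' i))) \<longrightarrow> \<sigma>' v = v"
      using less.hyps[OF lt lin'] less.prems(2) A'_def by auto
    have aV: "a \<in> verts G" using ap(1,2) by auto
    have aJ: "a \<notin> J"
    proof
      assume "a \<in> J"
      then obtain b where b: "b \<in> A" "a = f b" using linking_image[OF less.prems(1,2) JV] by auto
      show False
      proof (cases "b = a")
        case True
        have "awalk u p (f a)" using ap(3) by (auto simp: apath_def)
        then have "awlast u p = f a" by blast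
        then have "f a \<in> set (awalk_verts u p)" by (metis last_in_set awalk_verts_non_Nil)
        then show False using True b(2) ap(4) by metis
      next
        case False
        then show False using L(3)[OF b(1) a(1)] L(5)[OF b(1)] L(4)[OF a(1)] b by auto
      qed
    qed
    have sa: "\<sigma>' a = a"
    proof -
      have "\<forall>i\<in>A'. a \<notin> set (awalk_verts i (P' i))"
      proof
        fix i assume i: "i \<in> A'"
        show "a \<notin> set (awalk_verts i (P' i))"
        proof (cases "i = u")
          case True then show ?thesis using ap(4) P'_def by simp
        next
          case False
          then have "i \<in> A - {a}" using i A'_def by auto
          then show ?thesis using L(3)[OF a(1), of i] L(4)[OF a(1)] False P'_def by auto
        qed
      qed
      then show ?thesis using IH(4) by auto
    qed
    define \<sigma> where "\<sigma> = \<sigma>'(a := u)"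
    define ee where "ee = e'(a := e)"
    have aVJ: "a \<in> verts G - J" using aV aJ by simp
    have bij: "bij_betw \<sigma> (verts G - J) (verts G - A)"
    proof -
      have "bij_betw \<sigma> (verts G - J) (insert u ((verts G - A') - {\<sigma>' a}))"
        unfolding \<sigma>_def by (rule bij_upd[OF IH(1) aVJ]) (auto simp: A'_def)
      moreover have "insert u ((verts G - A') - {\<sigma>' a}) = verts G - A"
        using sa uV uA a(1) ua unfolding A'_def by auto
      ultimately show ?thesis by simp
    qed
    have ok: "\<forall>v\<in>verts G - J. mok G v (\<sigma> v) (ee v)"
      using IH(2) ap(1,2) ua unfolding \<sigma>_def ee_def mok_def u_def by auto
    have finVJ: "finite (verts G - J)" by simp
    have c1: "(\<Sum>v\<in>verts G - J. mcost w v (\<sigma> v) (ee v))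
        = mcost w a u e + (\<Sum>v\<in>verts G - J - {a}. mcost w v (\<sigma>' v) (e' v))"
      unfolding \<sigma>_def ee_def by (rule sum_upd[OF finVJ aVJ])
    have c2: "(\<Sum>v\<in>verts G - J. mcost w v (\<sigma>' v) (e' v))
        = mcost w a (\<sigma>' a) (e' a) + (\<Sum>v\<in>verts G - J - {a}. mcost w v (\<sigma>' v) (e' v))"
      using finVJ aVJ by (simp add: sum.remove)
    have c3: "linking_weight w A' P' = sum_list (map w p) + (\<Sum>i\<in>A - {a}. sum_list (map w (P i)))"
      unfolding linking_weight_def A'_def P'_def using uA finA by (simp, intro sum.cong) auto
    have c4: "linking_weight w A P = sum_list (map w (P a)) + (\<Sum>i\<in>A - {a}. sum_list (map w (P i)))"
      unfolding linking_weight_def using a(1) less.prems(2) by (simp add: sum.remove)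
    have cost: "(\<Sum>v\<in>verts G - J. mcost w v (\<sigma> v) (ee v)) = linking_weight w A P"
      using c1 c2 c3 c4 IH(3) sa ua a(2) by (simp add: mcost_def)
    have fx: "\<forall>v. (\<forall>i\<in>A. v \<notin> set (awalk_verts i (P i))) \<longrightarrow> \<sigma> v = v"
    proof (intro allI impI)
      fix v assume v: "\<forall>i\<in>A. v \<notin> set (awalk_verts i (P i))"
      then have "v \<noteq> a" using L(4)[OF a(1)] a(1) by auto
      moreover have "\<forall>i\<in>A'. v \<notin> set (awalk_verts i (P' i))"
        using v va a(1) unfolding A'_def P'_def by auto
      ultimately show "\<sigma> v = v" using IH(4) \<sigma>_def by auto
    qed
    show ?thesis using bij ok cost fx by blast
  qed
qed

end


context fin_digraph begin

lemma match_to_link: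
  assumes cyc: "\<And>p. cycle p \<Longrightarrow> sum_list (map w p) \<ge> (0::real)" and JV: "J \<subseteq> verts G"
  shows "A \<subseteq> verts G \<Longrightarrow> card A = card J \<Longrightarrow> bij_betw \<sigma> (verts G - J) (verts G - A)
    \<Longrightarrow> \<forall>v\<in>verts G - J. mok G v (\<sigma> v) (e v)
    \<Longrightarrow> \<exists>P f. is_linking G A J P f \<and> linking_weight w A P \<le> (\<Sum>v\<in>verts G - J. mcost w v (\<sigma> v) (e v))
      \<and> (\<forall>a\<in>A. set (awalk_verts a (P a)) \<subseteq> A \<union> J \<union> {v\<in>verts G - J. \<sigma> v \<noteq> v})"
proof (induction "card {v\<in>verts G - J. \<sigma> v \<noteq> v}" arbitrary: A \<sigma> rule: less_induct)
  case less
  have finJ: "finite J" by (rule finite_subset[OF JV finite_verts])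
  have finA: "finite A" by (rule finite_subset[OF less.prems(1) finite_verts])
  show ?case
  proof (cases "A \<subseteq> J")
    case True
    then have AJ: "A = J" using less.prems(2) finJ by (metis card_subset_eq)
    have b: "bij_betw \<sigma> (verts G - J) (verts G - J)" using less.prems(3) AJ by simp
    have aw: "\<forall>v\<in>verts G - J. \<sigma> v \<noteq> v \<longrightarrow> awalk v [e v] (\<sigma> v)"
    proof (intro ballI impI)
      fix v assume "v \<in> verts G - J" "\<sigma> v \<noteq> v"
      then have "e v \<in> arcs G" "tail G (e v) = v" "head G (e v) = \<sigma> v"
        using less.prems(4) unfolding mok_def by auto
      then show "awalk v [e v] (\<sigma> v)" using arc_implies_awalk by force
    qed
    have finVJ0: "finite (verts G - J)" by simp
    have "0 \<le> (\<Sum>v\<in>verts G - J. if \<sigma> v = v then 0 else sum_list (map w [e v]))"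
      using perm_nonneg[OF cyc finVJ0 b, of "\<lambda>v. [e v]"] aw by simp
    moreover have "(\<Sum>v\<in>verts G - J. if \<sigma> v = v then 0 else sum_list (map w [e v]))
       = (\<Sum>v\<in>verts G - J. mcost w v (\<sigma> v) (e v))" by (rule sum.cong) (auto simp: mcost_def)
    ultimately have nn: "0 \<le> (\<Sum>v\<in>verts G - J. mcost w v (\<sigma> v) (e v))" by simp
    have lin: "is_linking G A J (\<lambda>_. []) id"
      unfolding is_linking_def using AJ less.prems(1) by (auto simp: apath_Nil_iff)
    show ?thesis
      apply (rule exI[of _ "\<lambda>_. []"], rule exI[of _ id])
      using lin nn by (auto simp: linking_weight_def)
  next
    case False
    then obtain v where v: "v \<in> A" "v \<notin> J" by auto
    have vV: "v \<in> verts G" using v less.prems(1) by auto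
    have vVJ: "v \<in> verts G - J" using vV v by simp
    define u where "u = \<sigma> v"
    have uVA: "u \<in> verts G - A" using less.prems(3) vVJ unfolding u_def bij_betw_def by auto
    have uv: "u \<noteq> v" using uVA v by auto
    have arc: "e v \<in> arcs G" "tail G (e v) = v" "head G (e v) = u"
      using less.prems(4) vVJ uv unfolding mok_def u_def by auto
    define A' where "A' = insert u (A - {v})"
    define \<sigma>' where "\<sigma>' = \<sigma>(v := v)"
    have b': "bij_betw \<sigma>' (verts G - J) (verts G - A')"
    proof -
      have "bij_betw \<sigma>' (verts G - J) (insert v ((verts G - A) - {\<sigma> v}))"
        unfolding \<sigma>'_def by (rule bij_upd[OF less.prems(3) vVJ]) (use v in auto)
      moreover have "insert v ((verts G - A) - {\<sigma> v}) = verts G - A'"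
        unfolding A'_def u_def[symmetric] using vV v uv by auto
      ultimately show ?thesis by simp
    qed
    have ok': "\<forall>x\<in>verts G - J. mok G x (\<sigma>' x) (e x)"
      using less.prems(4) unfolding \<sigma>'_def mok_def by auto
    have A'V: "A' \<subseteq> verts G" using less.prems(1) uVA A'_def by auto
    have cA': "card A' = card J"
    proof -
      have "card A > 0" using v(1) finA card_gt_0_iff by blast
      then show ?thesis unfolding A'_def using uVA v(1) finA less.prems(2)
        by (simp add: card.insert_remove)
    qed
    have Nsub: "{x\<in>verts G - J. \<sigma>' x \<noteq> x} = {x\<in>verts G - J. \<sigma> x \<noteq> x} - {v}"
      unfolding \<sigma>'_def by auto
    have lt: "card {x\<in>verts G - J. \<sigma>' x \<noteq> x} < card {x\<in>verts G - J. \<sigma> x \<noteq> x}"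
      unfolding Nsub using vVJ uv u_def by (intro psubset_card_mono) auto
    obtain P' f' where IH: "is_linking G A' J P' f'"
      "linking_weight w A' P' \<le> (\<Sum>x\<in>verts G - J. mcost w x (\<sigma>' x) (e x))"
      "\<forall>a\<in>A'. set (awalk_verts a (P' a)) \<subseteq> A' \<union> J \<union> {x\<in>verts G - J. \<sigma>' x \<noteq> x}"
      using less.hyps[OF lt A'V cA' b' ok'] by blast
    note L = linking_facts[OF IH(1)]
    have uA': "u \<in> A'" unfolding A'_def by simp
    have vnot: "\<forall>a\<in>A'. v \<notin> set (awalk_verts a (P' a))"
    proof
      fix a assume "a \<in> A'"
      then have "set (awalk_verts a (P' a)) \<subseteq> A' \<union> J \<union> {x\<in>verts G - J. \<sigma>' x \<noteq> x}" using IH(3) by auto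
      moreover have "v \<notin> A' \<union> J \<union> {x\<in>verts G - J. \<sigma>' x \<noteq> x}"
        using uv v unfolding A'_def \<sigma>'_def by auto
      ultimately show "v \<notin> set (awalk_verts a (P' a))" by blast
    qed
    define P where "P = P'(v := e v # P' u)"
    define f where "f = f'(v := f' u)"
    have pv: "set (awalk_verts v (P v)) = insert v (set (awalk_verts u (P' u)))"
      using arc unfolding P_def by simp
    have lin: "is_linking G A J P f"
      unfolding is_linking_def
    proof (intro conjI ballI impI)
      show "card A = card J" by (rule less.prems(2))
    next
      fix i assume i: "i \<in> A"
      show "apath i (P i) (f i)"
      proof (cases "i = v")
        case True
        then show ?thesis using arc L(1)[OF uA'] vnot uA' unfolding P_def f_def
          by (auto simp: apath_Cons_iff)
      next
        case False
        then have "i \<in> A'" "i \<noteq> u" using i uVA A'_def by auto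
        then show ?thesis using L(1) False unfolding P_def f_def by auto
      qed
      show "f i \<in> J"
        using L(2) i uA' uVA unfolding f_def A'_def by (cases "i = v") auto
    next
      fix i i' assume ii: "i \<in> A" "i' \<in> A" "i \<noteq> i'"
      have other: "j \<in> A - {v} \<Longrightarrow> j \<in> A' \<and> j \<noteq> u \<and> P j = P' j" for j
        using uVA unfolding A'_def P_def by auto
      show "set (awalk_verts i (P i)) \<inter> set (awalk_verts i' (P i')) = {}"
      proof (cases "i = v")
        case True
        then have o: "i' \<in> A' \<and> i' \<noteq> u \<and> P i' = P' i'" using other ii by auto
        then show ?thesis using True pv L(3)[OF uA', of i'] vnot by auto
      next
        case iv: False
        then have o: "i \<in> A' \<and> i \<noteq> u \<and> P i = P' i" using other ii by auto
        show ?thesis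
        proof (cases "i' = v")
          case True
          then show ?thesis using o pv L(3)[OF uA', of i] vnot by auto
        next
          case False
          then have "i' \<in> A' \<and> i' \<noteq> u \<and> P i' = P' i'" using other ii by auto
          then show ?thesis using o L(3) ii(3) by auto
        qed
      qed
    qed
    have finA': "finite (A - {v})" using finA by simp
    have w1: "linking_weight w A' P' = sum_list (map w (P' u)) + (\<Sum>i\<in>A - {v}. sum_list (map w (P' i)))"
      unfolding linking_weight_def A'_def using uVA finA' by simp
    have w2: "linking_weight w A P = sum_list (map w (P v)) + (\<Sum>i\<in>A - {v}. sum_list (map w (P' i)))"
    proof -
      have "linking_weight w A P = sum_list (map w (P v)) + (\<Sum>i\<in>A - {v}. sum_list (map w (P i)))"
        unfolding linking_weight_def using v(1) finA by (simp add: sum.remove)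
      moreover have "(\<Sum>i\<in>A - {v}. sum_list (map w (P i))) = (\<Sum>i\<in>A - {v}. sum_list (map w (P' i)))"
        by (rule sum.cong) (auto simp: P_def)
      ultimately show ?thesis by simp
    qed
    have finVJ: "finite (verts G - J)" by simp
    have m: "(\<Sum>x\<in>verts G - J. mcost w x (\<sigma> x) (e x)) = (\<Sum>x\<in>verts G - J. mcost w x (\<sigma>' x) (e x)) + w (e v)"
    proof -
      have "(\<Sum>x\<in>verts G - J. mcost w x (\<sigma> x) (e x)) = mcost w v (\<sigma> v) (e v) + (\<Sum>x\<in>verts G - J - {v}. mcost w x (\<sigma> x) (e x))"
        using finVJ vVJ by (simp add: sum.remove)
      moreover have "(\<Sum>x\<in>verts G - J. mcost w x (\<sigma>' x) (e x)) = mcost w v (\<sigma>' v) (e v) + (\<Sum>x\<in>verts G - J - {v}. mcost w x (\<sigma>' x) (e x))"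
        using finVJ vVJ by (simp add: sum.remove)
      moreover have "(\<Sum>x\<in>verts G - J - {v}. mcost w x (\<sigma> x) (e x)) = (\<Sum>x\<in>verts G - J - {v}. mcost w x (\<sigma>' x) (e x))"
        by (rule sum.cong) (auto simp: \<sigma>'_def)
      ultimately show ?thesis using uv unfolding u_def by (simp add: mcost_def \<sigma>'_def)
    qed
    have wt: "linking_weight w A P \<le> (\<Sum>x\<in>verts G - J. mcost w x (\<sigma> x) (e x))"
      using w1 w2 m IH(2) unfolding P_def by simp
    have uact: "u \<in> A \<union> J \<union> {x\<in>verts G - J. \<sigma> x \<noteq> x}"
    proof (cases "u \<in> J")
      case False
      have "\<sigma> u \<noteq> u"
      proof
        assume "\<sigma> u = u"
        then have "\<sigma> u = \<sigma> v" using u_def by simp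
        moreover have "u \<in> verts G - J" using uVA False by auto
        ultimately show False using less.prems(3) vVJ uv unfolding bij_betw_def inj_on_def by blast
      qed
      then show ?thesis using uVA False by auto
    qed auto
    have sup: "\<forall>a\<in>A. set (awalk_verts a (P a)) \<subseteq> A \<union> J \<union> {x\<in>verts G - J. \<sigma> x \<noteq> x}"
    proof
      fix a assume a: "a \<in> A"
      have gen: "\<And>b. b \<in> A' \<Longrightarrow> set (awalk_verts b (P' b)) \<subseteq> A \<union> J \<union> {x\<in>verts G - J. \<sigma> x \<noteq> x}"
      proof -
        fix b assume "b \<in> A'"
        then have "set (awalk_verts b (P' b)) \<subseteq> A' \<union> J \<union> {x\<in>verts G - J. \<sigma>' x \<noteq> x}" using IH(3) by auto
        moreover have "A' \<union> J \<union> {x\<in>verts G - J. \<sigma>' x \<noteq> x} \<subseteq> A \<union> J \<union> {x\<in>verts G - J. \<sigma> x \<noteq> x}"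
          using uact unfolding A'_def \<sigma>'_def by auto
        ultimately show "set (awalk_verts b (P' b)) \<subseteq> A \<union> J \<union> {x\<in>verts G - J. \<sigma> x \<noteq> x}" by blast
      qed
      show "set (awalk_verts a (P a)) \<subseteq> A \<union> J \<union> {x\<in>verts G - J. \<sigma> x \<noteq> x}"
      proof (cases "a = v")
        case True then show ?thesis using pv gen[OF uA'] v(1) by auto
      next
        case False
        then have "a \<in> A'" "P a = P' a" using a uVA unfolding A'_def P_def by auto
        then show ?thesis using gen by auto
      qed
    qed
    show ?thesis using lin wt sup by blast
  qed
qed

end


lemma mlw_le: "is_linking G I J P f \<Longrightarrow> min_linking_weight G w J I \<le> ereal (linking_weight w I P)"
  unfolding min_linking_weight_def by (rule Inf_lower) blast

lemma mlw_inf: "\<not> has_linking G I J \<Longrightarrow> min_linking_weight G w J I = \<infinity>"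
  unfolding min_linking_weight_def has_linking_def by (auto simp: top_ereal_def)

context fin_digraph begin

lemma mlw_attain:
  assumes "has_linking G I J" "finite I"
  shows "\<exists>P f. is_linking G I J P f \<and> min_linking_weight G w J I = ereal (linking_weight w I P)"
proof -
  define W where "W = {ereal (linking_weight w I P) | P f. is_linking G I J P f}"
  define B where "B = {p. set p \<subseteq> arcs G \<and> length p \<le> card (verts G)}"
  have "W \<subseteq> (\<lambda>Q. ereal (linking_weight w I Q)) ` (PiE I (\<lambda>_. B))"
  proof
    fix x assume "x \<in> W"
    then obtain P f where x: "x = ereal (linking_weight w I P)" "is_linking G I J P f" unfolding W_def by blast
    have "restrict P I \<in> PiE I (\<lambda>_. B)"
    proof
      fix i assume "i \<in> I"
      then have "apath i (P i) (f i)" using x(2) unfolding is_linking_def by auto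
      then show "restrict P I i \<in> B" using \<open>i \<in> I\<close> length_apath unfolding B_def
        by (auto simp: apath_def)
    qed auto
    moreover have "linking_weight w I P = linking_weight w I (restrict P I)"
      unfolding linking_weight_def by (rule sum.cong) auto
    ultimately show "x \<in> (\<lambda>Q. ereal (linking_weight w I Q)) ` (PiE I (\<lambda>_. B))" using x(1) by auto
  qed
  moreover have "finite B" unfolding B_def
    using finite_lists_length_le[OF finite_arcs] by simp
  ultimately have fin: "finite W" using assms(2) by (meson finite_PiE finite_imageI finite_subset)
  have ne: "W \<noteq> {}" using assms(1) unfolding W_def has_linking_def by blast
  have "Inf W \<in> W" using cInf_eq_Min[OF fin ne] Min_in[OF fin ne] by simp
  then show ?thesis unfolding W_def min_linking_weight_def by auto
qed

lemma gen_exch: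
  assumes cyc: "\<And>p. cycle p \<Longrightarrow> sum_list (map w p) \<ge> (0::real)"
    and JK: "J \<subseteq> K" and KV: "K \<subseteq> verts G" and SV: "S \<subseteq> verts G" and TV: "T \<subseteq> verts G"
    and cS: "card S + 1 = card J" and cT: "card T = card K + 1"
  shows "min_twice_or_inf (\<lambda>t. min_linking_weight G w J (insert t S) + min_linking_weight G w K (T - {t})) (T - S)"
proof -
  define g where "g = (\<lambda>t. min_linking_weight G w J (insert t S) + min_linking_weight G w K (T - {t}))"
  have JV: "J \<subseteq> verts G" using JK KV by auto
  have finT: "finite T" by (rule finite_subset[OF TV finite_verts])
  have finS: "finite S" by (rule finite_subset[OF SV finite_verts])
  show ?thesis unfolding g_def[symmetric] min_twice_or_inf_def
  proof (cases "\<forall>t\<in>T - S. g t = \<infinity>")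
    case True then show "(\<forall>t\<in>T - S. g t = \<infinity>) \<or> (\<exists>t1\<in>T - S. \<exists>t2\<in>T - S. t1 \<noteq> t2 \<and> g t1 = g t2 \<and> (\<forall>t\<in>T - S. g t1 \<le> g t))" by blast
  next
    case False
    then obtain t' where t': "t' \<in> T - S" "g t' \<noteq> \<infinity>" by blast
    have finX: "finite (T - S)" using finT by simp
    have neX: "g ` (T - S) \<noteq> {}" using t' by auto
    obtain t0 where t0: "t0 \<in> T - S" "g t0 = Min (g ` (T - S))"
      using Min_in[OF finite_imageI[OF finX] neX] by auto
    have min: "\<forall>t\<in>T - S. g t0 \<le> g t" using t0 finX by simp
    have "g t0 \<noteq> \<infinity>" using min t' by (metis ereal_infty_less_eq(1))
    then have fin1: "min_linking_weight G w J (insert t0 S) \<noteq> \<infinity>"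
      and fin2: "min_linking_weight G w K (T - {t0}) \<noteq> \<infinity>"
      unfolding g_def by auto
    have hl1: "has_linking G (insert t0 S) J" using fin1 mlw_inf by metis
    have hl2: "has_linking G (T - {t0}) K" using fin2 mlw_inf by metis
    obtain P1 f1 where L1: "is_linking G (insert t0 S) J P1 f1"
      "min_linking_weight G w J (insert t0 S) = ereal (linking_weight w (insert t0 S) P1)"
      using mlw_attain[OF hl1] finS by blast
    obtain P2 f2 where L2: "is_linking G (T - {t0}) K P2 f2"
      "min_linking_weight G w K (T - {t0}) = ereal (linking_weight w (T - {t0}) P2)"
      using mlw_attain[OF hl2] finT by blast
    obtain s1 e1 where M1: "bij_betw s1 (verts G - J) (verts G - insert t0 S)"
      "\<forall>v\<in>verts G - J. mok G v (s1 v) (e1 v)"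
      "(\<Sum>v\<in>verts G - J. mcost w v (s1 v) (e1 v)) = linking_weight w (insert t0 S) P1"
      using link_to_match[OF JV L1(1)] finS by blast
    obtain s2 e2 where M2: "bij_betw s2 (verts G - K) (verts G - (T - {t0}))"
      "\<forall>v\<in>verts G - K. mok G v (s2 v) (e2 v)"
      "(\<Sum>v\<in>verts G - K. mcost w v (s2 v) (e2 v)) = linking_weight w (T - {t0}) P2"
      using link_to_match[OF KV L2(1)] finT by blast
    have t0V: "t0 \<in> verts G" using t0 TV by auto
    have e1: "verts G - insert t0 S = (verts G - S) - {t0}" by auto
    have e2: "verts G - (T - {t0}) = insert t0 (verts G - T)" using t0V t0 by auto
    obtain t1 s1' e1' s2' e2' where X: "t1 \<in> (verts G - S) - (verts G - T) - {t0}"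
      "bij_betw s1' (verts G - J) ((verts G - S) - {t1})"
      "bij_betw s2' (verts G - K) (insert t1 (verts G - T))"
      "\<forall>x\<in>verts G - J. mok G x (s1' x) (e1' x)" "\<forall>y\<in>verts G - K. mok G y (s2' y) (e2' y)"
      "(\<Sum>x\<in>verts G - J. mcost w x (s1' x) (e1' x)) + (\<Sum>y\<in>verts G - K. mcost w y (s2' y) (e2' y))
       = (\<Sum>x\<in>verts G - J. mcost w x (s1 x) (e1 x)) + (\<Sum>y\<in>verts G - K. mcost w y (s2 y) (e2 y))"
    proof -
      have Y: "verts G - K \<subseteq> verts G - J" using JK by auto
      have t0P: "t0 \<in> verts G - S" and t0Q: "t0 \<notin> verts G - T" using t0V t0 by auto
      have b1': "bij_betw s1 (verts G - J) ((verts G - S) - {t0})" using M1(1) e1 by simp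
      have b2': "bij_betw s2 (verts G - K) (insert t0 (verts G - T))" using M2(1) e2 by simp
      have fJ: "finite (verts G - J)" by simp
      show ?thesis using exch[where ok="mok G" and ?e1.0=e1 and ?e2.0=e2 and \<kappa>="mcost w", OF fJ Y t0P t0Q b1' b2' M1(2) M2(2)] that by blast
    qed
    have t1: "t1 \<in> T - S" "t1 \<noteq> t0" using X(1) TV by auto
    have b1: "bij_betw s1' (verts G - J) (verts G - insert t1 S)"
      using X(2) by (metis Diff_insert)
    have b2: "bij_betw s2' (verts G - K) (verts G - (T - {t1}))"
    proof -
      have "insert t1 (verts G - T) = verts G - (T - {t1})" using t1 TV by auto
      then show ?thesis using X(3) by simp
    qed
    have cA1: "card (insert t1 S) = card J" using cS t1 finS by simp
    have cA2: "card (T - {t1}) = card K" using cT t1 finT by simp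
    obtain Q1 h1 where N1: "is_linking G (insert t1 S) J Q1 h1"
      "linking_weight w (insert t1 S) Q1 \<le> (\<Sum>x\<in>verts G - J. mcost w x (s1' x) (e1' x))"
      using match_to_link[OF cyc JV _ cA1 b1 X(4)] SV t1 TV by blast
    obtain Q2 h2 where N2: "is_linking G (T - {t1}) K Q2 h2"
      "linking_weight w (T - {t1}) Q2 \<le> (\<Sum>y\<in>verts G - K. mcost w y (s2' y) (e2' y))"
      using match_to_link[OF cyc KV _ cA2 b2 X(5)] TV by blast
    have "g t1 \<le> ereal (linking_weight w (insert t1 S) Q1) + ereal (linking_weight w (T - {t1}) Q2)"
      unfolding g_def by (intro add_mono mlw_le[OF N1(1)] mlw_le[OF N2(1)])
    also have "\<dots> \<le> ereal ((\<Sum>x\<in>verts G - J. mcost w x (s1' x) (e1' x)) + (\<Sum>y\<in>verts G - K. mcost w y (s2' y) (e2' y)))"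
      using N1(2) N2(2) by simp
    also have "\<dots> = g t0" unfolding g_def L1(2) L2(2) X(6) M1(3) M2(3) by simp
    finally have "g t1 \<le> g t0" .
    then have "g t0 = g t1" using min t1 by (meson antisym)
    then show "(\<forall>t\<in>T - S. g t = \<infinity>) \<or> (\<exists>t1\<in>T - S. \<exists>t2\<in>T - S. t1 \<noteq> t2 \<and> g t1 = g t2 \<and> (\<forall>t\<in>T - S. g t1 \<le> g t))"
      using t0(1) t1 min by metis
  qed
qed

end


theorem theorem7p1:
  fixes G :: "(nat, 'b) pre_digraph" and w :: "'b \<Rightarrow> real"
    and n s :: nat and d :: "nat \<Rightarrow> nat" and S :: "nat \<Rightarrow> nat set"
  assumes "fin_digraph G"
    and "{1..n} \<subseteq> verts G"
    and "\<And>p. pre_digraph.cycle G p \<Longrightarrow> sum_list (map w p) \<ge> 0"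
    and "\<And>j. j < s \<Longrightarrow> S j \<subseteq> verts G"
    and "\<And>j. Suc j < s \<Longrightarrow> S j \<subset> S (Suc j)"
    and "\<And>j. j < s \<Longrightarrow> card (S j) = d j"
    and "\<And>j. Suc j < s \<Longrightarrow> d j < d (Suc j)"
    and "\<And>j. j < s \<Longrightarrow> \<exists>I. I \<subseteq> {1..n} \<and> has_linking G I (S j)"
  shows "valuated_flag_matroid n s d (\<lambda>j. min_linking_weight G w (S j))"
proof -
  interpret fin_digraph G by fact
  have chain: "j \<le> k \<Longrightarrow> k < s \<Longrightarrow> S j \<subseteq> S k" for j k
  proof (induction k)
    case 0 then show ?case by simp
  next
    case (Suc k)
    show ?case
    proof (cases "j = Suc k")
      case True then show ?thesis by simp
    next
      case False
      then have "S j \<subseteq> S k" using Suc by simp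
      also have "S k \<subseteq> S (Suc k)" using assms(5)[of k] Suc.prems by auto
      finally show ?thesis .
    qed
  qed
  have ex: "\<exists>B. B \<subseteq> {1..n} \<and> card B = d j \<and> min_linking_weight G w (S j) B \<noteq> \<infinity>" if j: "j < s" for j
  proof -
    obtain I P f where I: "I \<subseteq> {1..n}" "is_linking G I (S j) P f"
      using assms(8)[OF j] unfolding has_linking_def by blast
    have "card I = d j" using I(2) assms(6)[OF j] unfolding is_linking_def by simp
    moreover have "min_linking_weight G w (S j) I \<noteq> \<infinity>"
      using mlw_le[OF I(2), of w] by auto
    ultimately show ?thesis using I(1) by blast
  qed
  have exch: "min_twice_or_inf (\<lambda>t. min_linking_weight G w (S j) (insert t X) + min_linking_weight G w (S k) (T - {t})) (T - X)"
    if jk: "j \<le> k" "k < s" and X: "X \<subseteq> {1..n}" "card X + 1 = d j" and T: "T \<subseteq> {1..n}" "card T = d k + 1" for j k X T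
  proof (rule gen_exch)
    show "\<And>p. cycle p \<Longrightarrow> 0 \<le> sum_list (map w p)" using assms(3) by blast
    show "S j \<subseteq> S k" using chain jk by blast
    show "S k \<subseteq> verts G" using assms(4) jk by blast
    show "X \<subseteq> verts G" "T \<subseteq> verts G" using X T assms(2) by auto
    show "card X + 1 = card (S j)" using X assms(6) jk by simp
    show "card T = card (S k) + 1" using T assms(6) jk by simp
  qed
  show ?thesis
    unfolding valuated_flag_matroid_def valuated_matroid_def
  proof (intro conjI allI impI)
    fix j assume "j < s"
    then show "\<exists>B. B \<subseteq> {1..n} \<and> card B = d j \<and> min_linking_weight G w (S j) B \<noteq> \<infinity>" by (rule ex)
  next
    fix j X T assume "j < s" and h: "X \<subseteq> {1..n} \<and> card X + 1 = d j \<and> T \<subseteq> {1..n} \<and> card T = d j + 1"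
    then show "min_twice_or_inf (\<lambda>t. min_linking_weight G w (S j) (insert t X) + min_linking_weight G w (S j) (T - {t})) (T - X)"
      using exch[of j j X T] by blast
  next
    fix j k X T assume h: "j < k \<and> k < s \<and> X \<subseteq> {1..n} \<and> card X + 1 = d j \<and> T \<subseteq> {1..n} \<and> card T = d k + 1"
    then show "min_twice_or_inf (\<lambda>t. min_linking_weight G w (S j) (insert t X) + min_linking_weight G w (S k) (T - {t})) (T - X)"
      using exch[of j k X T] by auto
  qed
qed


end
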